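(* Let $P=(N,L)$ be a filtration pair for an isolated invariant set $S$. If $x\in N$ satisfies $f^n(x)\in N\setminus L$ for all $n>0$, then $\omega(x)\subset S$.
   Context: Let $X$ be a locally compact metric space, $U\subset X$ open and $f:U\to X$ continuous. A solution through $x$ is a map $\sigma:\mathbb Z\to U$ with $\sigma(0)=x$ and $f(\sigma(n))=\sigma(n+1)$ for all $n$; for $N\subset U$, $\operatorname{Inv} N$ is the set of $x\in N$ admitting a solution through $x$ with all values in $N$. A compact $N\subset U$ is an isolating neighborhood if $\operatorname{Inv} N\subset\operatorname{Int} N$; $S$ is an isolated invariant set if $S=\operatorname{Inv} N$ for some isolating neighborhood $N$. The exit set of $N$ is $N^-=\{x\in N:f(x)\notin\operatorname{Int} N\}$. A filtration pair for an isolated invariant set $S$ is a pair of compact sets $L\subset N$ contained in the interior of the domain of $f$, each the closure of its interior, such that (1) $\operatorname{cl}(N\setminus L)$ is an isolating neighborhood with $\operatorname{Inv}\operatorname{cl}(N\setminus L)=S$; (2) $L$ is a neighborhood of $N^-$ in $N$; (3) $f(L)\cap\operatorname{cl}(N\setminus L)=\emptyset$. The $\omega$-limit set is $\omega(x)=\bigcap_{K>0}\operatorname{cl}\big(\bigcup_{n>K}\{f^n(x)\}\big)$. *)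

theory Defs
  imports "HOL-Analysis.Analysis"
begin

text \<open>The ambient locally compact metric space X is the type 'a (X = UNIV);
  f is a total HOL function but only its restriction to the open set U matters.\<close>

definition is_solution :: "'a set \<Rightarrow> ('a \<Rightarrow> 'a) \<Rightarrow> 'a \<Rightarrow> (int \<Rightarrow> 'a) \<Rightarrow> bool" where
  "is_solution U f x \<sigma> \<longleftrightarrow> \<sigma> 0 = x \<and> (\<forall>n. \<sigma> n \<in> U) \<and> (\<forall>n. f (\<sigma> n) = \<sigma> (n + 1))"

definition Inv :: "'a set \<Rightarrow> ('a \<Rightarrow> 'a) \<Rightarrow> 'a set \<Rightarrow> 'a set" where
  "Inv U f N = {x \<in> N. \<exists>\<sigma>. is_solution U f x \<sigma> \<and> (\<forall>n. \<sigma> n \<in> N)}"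

definition isolating_neighborhood :: "'a::metric_space set \<Rightarrow> ('a \<Rightarrow> 'a) \<Rightarrow> 'a set \<Rightarrow> bool" where
  "isolating_neighborhood U f N \<longleftrightarrow> compact N \<and> N \<subseteq> U \<and> Inv U f N \<subseteq> interior N"

definition isolated_invariant_set :: "'a::metric_space set \<Rightarrow> ('a \<Rightarrow> 'a) \<Rightarrow> 'a set \<Rightarrow> bool" where
  "isolated_invariant_set U f S \<longleftrightarrow> (\<exists>N. isolating_neighborhood U f N \<and> S = Inv U f N)"

definition exit_set :: "('a::metric_space \<Rightarrow> 'a) \<Rightarrow> 'a set \<Rightarrow> 'a set" where
  "exit_set f N = {x \<in> N. f x \<notin> interior N}"

definition filtration_pair ::
  "'a::metric_space set \<Rightarrow> ('a \<Rightarrow> 'a) \<Rightarrow> 'a set \<Rightarrow> 'a set \<Rightarrow> 'a set \<Rightarrow> bool" where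
  "filtration_pair U f S N L \<longleftrightarrow>
     compact N \<and> compact L \<and> L \<subseteq> N \<and> N \<subseteq> interior U \<and>
     closure (interior N) = N \<and> closure (interior L) = L \<and>
     isolating_neighborhood U f (closure (N - L)) \<and> Inv U f (closure (N - L)) = S \<and>
     (\<exists>V. openin (top_of_set N) V \<and> exit_set f N \<subseteq> V \<and> V \<subseteq> L) \<and>
     f ` L \<inter> closure (N - L) = {}"

definition omega_limit :: "('a::metric_space \<Rightarrow> 'a) \<Rightarrow> 'a \<Rightarrow> 'a set" where
  "omega_limit f x = (\<Inter>K\<in>{K::nat. K > 0}. closure (\<Union>n\<in>{n. n > K}. {(f ^^ n) x}))"

end

theory Submission
  imports Defs
begin

lemma omega_char:
  "y \<in> omega_limit f x \<longleftrightarrow> (\<forall>e>0. \<forall>K. \<exists>n>K. dist ((f ^^ n) x) y < e)"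
proof
  assume H: "y \<in> omega_limit f x"
  show "\<forall>e>0. \<forall>K. \<exists>n>K. dist ((f ^^ n) x) y < e"
  proof (intro allI impI)
    fix e :: real and K :: nat assume e: "e > 0"
    have "y \<in> closure (\<Union>n\<in>{n. n > Suc K}. {(f ^^ n) x})"
      using H unfolding omega_limit_def by blast
    then obtain z where "z \<in> (\<Union>n\<in>{n. n > Suc K}. {(f ^^ n) x})" "dist z y < e"
      using e by (metis closure_approachable)
    then show "\<exists>n>K. dist ((f ^^ n) x) y < e" using Suc_lessD by blast
  qed
next
  assume H: "\<forall>e>0. \<forall>K. \<exists>n>K. dist ((f ^^ n) x) y < e"
  show "y \<in> omega_limit f x"
    unfolding omega_limit_def
  proof (intro InterI, clarify)
    fix K :: nat
    show "y \<in> closure (\<Union>n\<in>{n. n > K}. {(f ^^ n) x})"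
      unfolding closure_approachable using H by fastforce
  qed
qed

locale omsetup =
  fixes f :: "'a::metric_space \<Rightarrow> 'a" and U M :: "'a set" and x :: 'a
  assumes oU: "open U" and cf: "continuous_on U f" and cM: "compact M"
    and MU: "M \<subseteq> U" and orb: "\<forall>n::nat. n > 0 \<longrightarrow> (f ^^ n) x \<in> M"
begin

lemma om_sub: "omega_limit f x \<subseteq> M"
proof
  fix y assume "y \<in> omega_limit f x"
  then have "y \<in> closure (\<Union>n\<in>{n. n > 1}. {(f ^^ n) x})"
    unfolding omega_limit_def by blast
  moreover have "(\<Union>n\<in>{n. n > (1::nat)}. {(f ^^ n) x}) \<subseteq> M" using orb by auto
  ultimately show "y \<in> M"
    using cM compact_imp_closed closure_minimal by blast
qed

lemma isc: "z \<in> M \<Longrightarrow> isCont f z"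
  using cf oU MU continuous_on_eq_continuous_at by blast

lemma om_fwd:
  assumes y: "y \<in> omega_limit f x" shows "f y \<in> omega_limit f x"
  unfolding omega_char
proof (intro allI impI)
  fix e :: real and K :: nat assume e: "e > 0"
  have "isCont f y" using isc om_sub y by blast
  then obtain d where d: "d > 0" "\<And>z. dist z y < d \<Longrightarrow> dist (f z) (f y) < e"
    using e unfolding continuous_at_eps_delta by metis
  obtain n where n: "n > K" "dist ((f ^^ n) x) y < d"
    using y d(1) unfolding omega_char by blast
  show "\<exists>n>K. dist ((f ^^ n) x) (f y) < e"
    using n d(2)[OF n(2)] by (intro exI[of _ "Suc n"]) auto
qed

lemma om_bwd:
  assumes y: "y \<in> omega_limit f x" shows "\<exists>z\<in>omega_limit f x. f z = y"
proof -
  have "\<forall>k. \<exists>n>Suc k. dist ((f ^^ n) x) y < 1 / (Suc k)"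
    using y unfolding omega_char by auto
  then obtain nn where nn: "\<And>k. nn k > Suc k" "\<And>k. dist ((f ^^ nn k) x) y < 1 / (Suc k)"
    by metis
  define zs where "zs k = (f ^^ (nn k - 1)) x" for k
  have zM: "zs k \<in> M" for k unfolding zs_def using orb nn(1)[of k] by auto
  have fz: "f (zs k) = (f ^^ nn k) x" for k
  proof -
    have "nn k = Suc (nn k - 1)" using nn(1)[of k] by auto
    then show ?thesis unfolding zs_def by (metis funpow.simps(2) o_apply)
  qed
  obtain z r where z: "z \<in> M" "strict_mono r" "(zs \<circ> r) \<longlonglongrightarrow> z"
    using cM zM unfolding compact_def by metis
  have lim1: "(\<lambda>k. (f ^^ nn k) x) \<longlonglongrightarrow> y"
  proof (rule metric_LIMSEQ_I)
    fix e :: real assume e: "e > 0"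
    obtain k0 where k0: "1 / real (Suc k0) < e" using e nat_approx_posE by blast
    show "\<exists>no. \<forall>k\<ge>no. dist ((f ^^ nn k) x) y < e"
    proof (intro exI allI impI)
      fix k assume "k \<ge> k0"
      then have "1 / real (Suc k) \<le> 1 / real (Suc k0)"
        by (simp add: frac_le)
      then show "dist ((f ^^ nn k) x) y < e" using nn(2)[of k] k0 by simp
    qed
  qed
  have "((\<lambda>k. f (zs k)) \<circ> r) \<longlonglongrightarrow> y"
    using LIMSEQ_subseq_LIMSEQ[OF lim1 z(2)] fz by simp
  moreover have "((\<lambda>k. f (zs k)) \<circ> r) \<longlonglongrightarrow> f z"
    using isCont_tendsto_compose[OF isc[OF z(1)] z(3)] by (simp add: o_def)
  ultimately have fzy: "f z = y" using LIMSEQ_unique by blast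
  have "z \<in> omega_limit f x"
    unfolding omega_char
  proof (intro allI impI)
    fix e :: real and K :: nat assume e: "e > 0"
    obtain k0 where k0: "\<And>k. k \<ge> k0 \<Longrightarrow> dist ((zs \<circ> r) k) z < e"
      using z(3) e unfolding lim_sequentially by metis
    define k where "k = max k0 K"
    have "r k \<ge> k" using z(2) seq_suble by blast
    then have "nn (r k) - 1 > K" using nn(1)[of "r k"] unfolding k_def by auto
    moreover have "dist ((f ^^ (nn (r k) - 1)) x) z < e"
      using k0[of k] unfolding k_def zs_def by auto
    ultimately show "\<exists>n>K. dist ((f ^^ n) x) z < e" by blast
  qed
  then show ?thesis using fzy by blast
qed

lemma om_inv:
  assumes y: "y \<in> omega_limit f x"
  shows "y \<in> Inv U f M"
proof -
  define W where "W = omega_limit f x"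
  obtain g where g: "\<And>w. w \<in> W \<Longrightarrow> g w \<in> W \<and> f (g w) = w"
    using om_bwd unfolding W_def by metis
  have gk: "(g ^^ k) y \<in> W" for k
    by (induction k) (use y g W_def in auto)
  have fk: "(f ^^ k) y \<in> W" for k
    by (induction k) (use y om_fwd W_def in auto)
  define \<sigma> where "\<sigma> n = (if n \<ge> 0 then (f ^^ nat n) y else (g ^^ nat (- n)) y)" for n :: int
  have sW: "\<sigma> n \<in> W" for n unfolding \<sigma>_def using gk fk by auto
  have step: "f (\<sigma> n) = \<sigma> (n + 1)" for n
  proof (cases "n \<ge> 0")
    case True
    then have "nat (n + 1) = Suc (nat n)" by auto
    then show ?thesis using True unfolding \<sigma>_def by auto
  next
    case False
    then obtain m where m: "nat (- n) = Suc m" "nat (-(n+1)) = m"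
      using False by (intro that[of "nat (-(n+1))"]) auto
    show ?thesis
    proof (cases "n + 1 \<ge> 0")
      case True
      then have "n = -1" using False by auto
      then show ?thesis unfolding \<sigma>_def using g[OF y[folded W_def]] by auto
    next
      case F2: False
      show ?thesis unfolding \<sigma>_def using False F2 m g[OF gk[of m]] by auto
    qed
  qed
  have "\<sigma> 0 = y" unfolding \<sigma>_def by simp
  moreover have "W \<subseteq> M" using om_sub W_def by simp
  ultimately show ?thesis
    unfolding Inv_def is_solution_def using sW step MU y W_def
    by (intro CollectI conjI exI[of _ \<sigma>]) auto
qed

end

theorem mainTheorem8:
  fixes f :: "'a::metric_space \<Rightarrow> 'a" and U S N L :: "'a set" and x :: 'a
  assumes "locally compact (UNIV :: 'a set)"
    and "open U" and "continuous_on U f"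
    and "isolated_invariant_set U f S"
    and "filtration_pair U f S N L"
    and "x \<in> N"
    and "\<forall>n::nat. n > 0 \<longrightarrow> (f ^^ n) x \<in> N - L"
  shows "omega_limit f x \<subseteq> S"
proof -
  define M where "M = closure (N - L)"
  have iso: "isolating_neighborhood U f M" and SM: "S = Inv U f M"
    using assms(5) unfolding filtration_pair_def M_def by auto
  have "omsetup f U M x"
  proof
    show "open U" "continuous_on U f" by (fact assms(2), fact assms(3))
    show "compact M" "M \<subseteq> U" using iso unfolding isolating_neighborhood_def by auto
    show "\<forall>n::nat. n > 0 \<longrightarrow> (f ^^ n) x \<in> M"
      using assms(7) closure_subset unfolding M_def by blast
  qed
  then show ?thesis using omsetup.om_inv SM by blast
qed

end
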